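(* Let $r>0$ be real, let $k_r\in(0,1)$ be the singular modulus, $k'^2_r=1-k_r^2$, and let $a(r)$ be the elliptic alpha function. For $n\ge 0$ let $$B^{(2)}_n=\sum_{j=0}^{n}\left[\binom{n}{j}\left(\tfrac12\right)_j\left(\tfrac12\right)_{n-j}\right]^2 .$$ Then $$\sum_{n=0}^{\infty}\frac{B^{(2)}_n}{(n!)^2}\,k_r^{2n}\left(\sqrt r\,k'^2_r\,n+a(r)-\sqrt r\,k_r^2\right)=\frac1\pi .$$
   Context: $K(x)=\int_0^{\pi/2}\frac{dt}{\sqrt{1-x^2\sin^2 t}}$ and $E(x)=\int_0^{\pi/2}\sqrt{1-x^2\sin^2 t}\,dt$. For $r>0$ the singular modulus $k_r\in(0,1)$ is the unique solution $w$ of $K(\sqrt{1-w^2})/K(w)=\sqrt r$. The elliptic alpha function is $a(r)=\frac{\pi}{4K(k_r)^2}-\sqrt r\left(\frac{E(k_r)}{K(k_r)}-1\right)$. $(a)_n=a(a+1)\cdots(a+n-1)$, $(a)_0=1$. *)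

theory Defs
  imports "HOL-Analysis.Analysis"
begin

definition ellK :: "real \<Rightarrow> real" where
  "ellK x = integral {0..pi/2} (\<lambda>t. 1 / sqrt (1 - x^2 * (sin t)^2))"

definition ellE :: "real \<Rightarrow> real" where
  "ellE x = integral {0..pi/2} (\<lambda>t. sqrt (1 - x^2 * (sin t)^2))"

definition singular_modulus :: "real \<Rightarrow> real" where
  "singular_modulus r =
     (THE w. 0 < w \<and> w < 1 \<and> ellK (sqrt (1 - w^2)) / ellK w = sqrt r)"

definition elliptic_alpha :: "real \<Rightarrow> real" where
  "elliptic_alpha r =
     (let k = singular_modulus r in
        pi / (4 * (ellK k)^2) - sqrt r * (ellE k / ellK k - 1))"

definition B2 :: "nat \<Rightarrow> real" where
  "B2 n = (\<Sum>j=0..n. (real (n choose j) * pochhammer (1/2) j * pochhammer (1/2) (n - j))^2)"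

end

theory Submission
  imports Defs
begin


definition cc :: "nat \<Rightarrow> real" where "cc n = pochhammer (1/2) n / fact n"
definition ee :: "nat \<Rightarrow> real" where "ee n = pochhammer (-1/2) n / fact n"

lemma cc_0[simp]: "cc 0 = 1" by (simp add: cc_def)
lemma cc_Suc: "cc (Suc n) = cc n * (2 * real n + 1) / (2 * real n + 2)"
  by (simp add: cc_def pochhammer_Suc field_simps)
lemma ee_Suc: "ee (Suc n) = ee n * (2 * real n - 1) / (2 * real n + 2)"
  by (simp add: ee_def pochhammer_Suc field_simps)

lemma cc_pos: "0 < cc n"
  by (induction n) (auto simp: cc_Suc)
lemma cc_le1: "cc n \<le> 1"
proof (induction n)
  case (Suc n)
  have "cc (Suc n) \<le> cc n" unfolding cc_Suc using cc_pos[of n]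
    by (simp add: field_simps)
  then show ?case using Suc by simp
qed simp

lemma ee_cc: "ee n * (2 * real n - 1) = - cc n"
proof (induction n)
  case 0 then show ?case by (simp add: ee_def)
next
  case (Suc n)
  have "ee (Suc n) * (2 * real (Suc n) - 1) = ee n * (2 * real n - 1) * (2 * real n + 1) / (2 * real n + 2)"
    by (simp add: ee_Suc field_simps)
  also have "\<dots> = - cc (Suc n)" using Suc by (simp add: cc_Suc)
  finally show ?case .
qed

lemma abs_ee_le1: "\<bar>ee n\<bar> \<le> 1"
proof (cases n)
  case 0 then show ?thesis by (simp add: ee_def)
next
  case (Suc m)
  have h: "ee n = - cc n / (2 * real n - 1)" using ee_cc[of n] Suc
    by (simp add: field_simps)
  have "\<bar>ee n\<bar> = cc n / (2 * real n - 1)" using h cc_pos[of n] Suc by (simp add: abs_div)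
  also have "\<dots> \<le> cc n" using cc_pos[of n] Suc by (simp add: field_simps)
  finally show ?thesis using cc_le1[of n] by simp
qed

lemma neg1_sq: "(-1::real)^n * (-1)^n = 1" 
  by (metis power_mult_distrib mult_minus1 power_one minus_minus)
lemma gchoose_cc: "((-1/2::real) gchoose n) * (- u)^n = cc n * u^n"
proof -
  have "(-1/2::real) gchoose n = (-1)^n * cc n" unfolding cc_def gbinomial_pochhammer by simp
  moreover have "(- u)^n = (-1)^n * u^n" by (rule power_minus)
  ultimately have "((-1/2::real) gchoose n) * (- u)^n = ((-1)^n * (-1)^n) * (cc n * u^n)"
    by (simp only: mult_ac)
  then show ?thesis by (simp only: neg1_sq mult_1)
qed
lemma gchoose_ee: "((1/2::real) gchoose n) * (- u)^n = ee n * u^n"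
proof -
  have "(1/2::real) gchoose n = (-1)^n * ee n" unfolding ee_def gbinomial_pochhammer by simp
  moreover have "(- u)^n = (-1)^n * u^n" by (rule power_minus)
  ultimately have "((1/2::real) gchoose n) * (- u)^n = ((-1)^n * (-1)^n) * (ee n * u^n)"
    by (simp only: mult_ac)
  then show ?thesis by (simp only: neg1_sq mult_1)
qed

lemma alg_helper: "(D::real) > 0 \<Longrightarrow> - (C::real) / D * C = (D + 2) * C ^ 2 - D * (C * (D + 1) / D) ^ 2"
proof -
  assume h: "D > 0"
  have "D * (C * (D + 1) / D) ^ 2 = C^2*(D+1)^2/D" using h by (simp add: power2_eq_square)
  moreover have "(D + 2) * C ^ 2 - C^2*(D+1)^2/D = - C / D * C" using h
    by (simp add: field_simps power2_eq_square) 
  ultimately show ?thesis by simp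
qed

lemma coeff_identity:
  "ee n * cc n = (2 * real n + 1) * cc n ^ 2 - (if n = 0 then 0 else (2 * real n - 1) * cc (n - 1) ^ 2)"
proof (cases n)
  case 0 then show ?thesis by (simp add: ee_def)
next
  case (Suc m)
  have e: "ee (Suc m) = - cc (Suc m) / (2 * real m + 1)" using ee_cc[of "Suc m"]
    by (simp add: field_simps)
  have c: "cc m = cc (Suc m) * (2 * real m + 2) / (2 * real m + 1)" using cc_Suc[of m]
    by (simp add: field_simps)
  have "ee (Suc m) * cc (Suc m) = (2 * real (Suc m) + 1) * cc (Suc m) ^ 2 - (2 * real (Suc m) - 1) * cc m ^ 2"
    apply (simp only: e c)
    using alg_helper[of "2 * real m + 1" "cc (Suc m)"] by (simp add: algebra_simps)
  then show ?thesis unfolding Suc by simp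
qed



definition W :: "nat \<Rightarrow> real" where "W n = integral {0..pi/2} (\<lambda>t. sin t ^ (2*n))"

lemma sinpow_integrable: "(\<lambda>t::real. sin t ^ m) integrable_on {a..b}"
  by (intro integrable_continuous_interval continuous_intros)

lemma wallis_step: "(2 * real n + 2) * W (Suc n) = (2 * real n + 1) * W n"
proof -
  define F where "F (t::real) = ( - (sin t ^ (2*n+1) * cos t) :: real)" for t
  define f where "f (t::real) = (2 * real n + 2) * sin t ^ (2*n+2) - (2 * real n + 1) * sin t ^ (2*n)" for t
  have d: "(F has_real_derivative f t) (at t)" for t
  proof -
    have "(F has_real_derivative - (real (2*n+1) * sin t ^ (2*n+1 - 1) * cos t * cos t + sin t ^ (2*n+1) * (- sin t))) (at t)"
      unfolding F_def by (rule derivative_eq_intros refl)+ (simp add: algebra_simps)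
    moreover have "- (real (2*n+1) * sin t ^ (2*n+1 - 1) * cos t * cos t + sin t ^ (2*n+1) * (- sin t)) = f t"
    proof -
      have c: "cos t * cos t = 1 - sin t ^ 2" using sin_cos_squared_add[of t] by (simp add: power2_eq_square)
      have "- (real (2*n+1) * sin t ^ (2*n+1 - 1) * cos t * cos t + sin t ^ (2*n+1) * (- sin t))
          = - (real (2*n+1) * sin t ^ (2*n) * (cos t * cos t) - sin t ^ (2*n+2))"
        by (simp add: algebra_simps power_Suc)
      also have "\<dots> = f t" unfolding c f_def by (simp add: algebra_simps power_add power2_eq_square)
      finally show ?thesis .
    qed
    ultimately show ?thesis by simp
  qed
  have "(f has_integral F (pi/2) - F 0) {0..pi/2}"
    by (rule fundamental_theorem_of_calculus)
       (auto simp: has_real_derivative_iff_has_vector_derivative[symmetric] intro!: DERIV_subset[OF d])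
  then have "integral {0..pi/2} f = 0" by (simp add: F_def integral_unique)
  moreover have "integral {0..pi/2} f = (2 * real n + 2) * W (Suc n) - (2 * real n + 1) * W n"
  proof -
    have i1: "(\<lambda>t. (2 * real n + 2) * sin t ^ (2*n+2)) integrable_on {0..pi/2}"
      by (intro integrable_continuous_interval continuous_intros)
    have i2: "(\<lambda>t. (2 * real n + 1) * sin t ^ (2*n)) integrable_on {0..pi/2}"
      by (intro integrable_continuous_interval continuous_intros)
    have "integral {0..pi/2} f = integral {0..pi/2} (\<lambda>t. (2 * real n + 2) * sin t ^ (2*n+2))
       - integral {0..pi/2} (\<lambda>t. (2 * real n + 1) * sin t ^ (2*n))"
      unfolding f_def by (rule integral_diff[OF i1 i2])
    also have "\<dots> = (2 * real n + 2) * integral {0..pi/2} (\<lambda>t. sin t ^ (2*n+2))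
       - (2 * real n + 1) * integral {0..pi/2} (\<lambda>t. sin t ^ (2*n))"
      by (simp only: integral_mult_right)
    also have "2*n+2 = 2 * Suc n" by simp
    finally show ?thesis unfolding W_def by simp
  qed
  ultimately show ?thesis by simp
qed

lemma W_eq: "W n = pi / 2 * cc n"
proof (induction n)
  case 0 then show ?case by (simp add: W_def)
next
  case (Suc n)
  have "W (Suc n) = (2 * real n + 1) * W n / (2 * real n + 2)"
    using wallis_step[of n] by (simp add: field_simps)
  then show ?case using Suc by (simp add: cc_Suc)
qed



lemma integral_series:
  fixes g :: "nat \<Rightarrow> real" and F :: "real \<Rightarrow> real" and x :: real
  assumes g: "\<And>n. \<bar>g n\<bar> \<le> 1" and x: "0 \<le> x" "x < 1"
    and F: "\<And>t. (\<lambda>n. g n * (x * sin t ^ 2)^n) sums F t"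
  shows "(\<lambda>n. g n * x^n * W n) sums integral {0..pi/2} F"
proof -
  define f where "f n t = g n * (x * sin t ^ 2)^n" for n and t :: real
  have fx: "f n t = g n * x^n * sin t ^ (2*n)" for n t
    unfolding f_def by (simp add: power_mult_distrib power_mult)
  have fx': "f i = (\<lambda>t. g i * x^i * sin t ^ (2*i))" for i by (rule ext) (rule fx)
  have bound: "norm (f n t) \<le> x^n" for n t
  proof -
    have "norm (f n t) = \<bar>g n\<bar> * (x^n * \<bar>sin t\<bar> ^ (2*n))"
      unfolding fx using x by (simp add: abs_mult power_abs)
    also have "\<dots> \<le> 1 * (x^n * 1)"
      using g[of n] x by (intro mult_mono) (auto intro!: power_le_one)
    finally show ?thesis by simp
  qed
  have u: "uniform_limit {0..pi/2} (\<lambda>n t. \<Sum>i<n. f i t) (\<lambda>t. suminf (\<lambda>i. f i t)) sequentially"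
    by (rule Weierstrass_m_test[where M="\<lambda>n. x^n"]) (use bound x in \<open>auto intro: summable_geometric\<close>)
  have lim: "(\<lambda>t. suminf (\<lambda>i. f i t)) = F"
    using F unfolding f_def by (auto intro!: ext simp: sums_unique[symmetric])
  have cont: "continuous_on {0..pi/2} (\<lambda>t. \<Sum>i<n. f i t)" for n
    unfolding f_def by (intro continuous_intros)
  obtain I J where I: "\<And>n. ((\<lambda>t. \<Sum>i<n. f i t) has_integral I n) {0..pi/2}"
    and J: "(F has_integral J) {0..pi/2}" and IJ: "I \<longlonglongrightarrow> J"
    using uniform_limit_integral[OF u[unfolded lim] cont] by auto
  have In: "I n = (\<Sum>i<n. g i * x^i * W i)" for n
  proof -
    have "I n = integral {0..pi/2} (\<lambda>t. \<Sum>i<n. f i t)" using I[of n] by (simp add: integral_unique)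
    also have "\<dots> = (\<Sum>i<n. integral {0..pi/2} (f i))"
      by (rule integral_sum) (auto simp: f_def intro!: integrable_continuous_interval continuous_intros)
    also have "\<dots> = (\<Sum>i<n. g i * x^i * W i)"
      by (intro sum.cong refl) (simp add: fx' W_def)
    finally show ?thesis .
  qed
  have "J = integral {0..pi/2} F" using J by (simp add: integral_unique)
  moreover have "I = (\<lambda>n. \<Sum>i<n. g i * x^i * W i)" using In by (rule ext)
  ultimately show ?thesis unfolding sums_def using IJ by simp
qed



definition AA :: "real \<Rightarrow> real" where "AA x = suminf (\<lambda>n. cc n ^ 2 * x ^ n)"
definition DD :: "real \<Rightarrow> real" where "DD x = suminf (\<lambda>n. ee n * cc n * x ^ n)"

lemma powr_mhalf: "(y::real) > 0 \<Longrightarrow> y powr (-1/2) = 1 / sqrt y"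
proof -
  assume y: "y > 0"
  have "y powr (-1/2) = y powr (-(1/2))" by (simp only: minus_divide_left)
  also have "\<dots> = inverse (y powr (1/2))" by (rule powr_minus)
  also have "\<dots> = 1 / sqrt y" using y by (simp add: powr_half_sqrt inverse_eq_divide)
  finally show ?thesis .
qed

lemma K_sums:
  assumes k: "\<bar>k\<bar> < 1"
  shows "(\<lambda>n. cc n ^ 2 * (k^2) ^ n) sums (2 / pi * ellK k)"
proof -
  define x where "x = k^2"
  have x: "0 \<le> x" "x < 1" unfolding x_def using k
    by (auto simp: abs_square_less_1)
  have F: "(\<lambda>n. cc n * (x * sin t ^ 2)^n) sums (1 / sqrt (1 - k^2 * sin t ^ 2))" for t
  proof -
    have s: "0 \<le> x * sin t ^ 2" "x * sin t ^ 2 < 1"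
    proof -
      show "0 \<le> x * sin t ^ 2" using x by simp
      have "x * sin t ^ 2 \<le> x * 1" using x by (intro mult_left_mono) (auto simp: abs_square_le_1)
      then show "x * sin t ^ 2 < 1" using x by simp
    qed
    have "\<bar>- (x * sin t ^ 2)\<bar> < 1" using s by simp
    from gen_binomial_real[OF this, of "-1/2"]
    have "(\<lambda>n. cc n * (x * sin t ^ 2)^n) sums ((1 + - (x * sin t ^ 2)) powr (-1/2))"
      by (simp only: gchoose_cc)
    also have "(1 + - (x * sin t ^ 2)) powr (-1/2) = 1 / sqrt (1 - k^2 * sin t ^ 2)"
      using s by (subst powr_mhalf) (auto simp: x_def)
    finally show ?thesis .
  qed
  have "(\<lambda>n. cc n * x^n * W n) sums integral {0..pi/2} (\<lambda>t. 1 / sqrt (1 - k^2 * sin t ^ 2))"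
  proof (rule integral_series[OF _ x F])
    fix n show "\<bar>cc n\<bar> \<le> 1" using cc_pos[of n] cc_le1[of n] by (simp add: abs_of_pos)
  qed
  moreover have "cc n * x^n * W n = pi / 2 * (cc n ^ 2 * x ^ n)" for n
    unfolding W_eq power2_eq_square by (simp only: ac_simps)
  ultimately have "(\<lambda>n. pi / 2 * (cc n ^ 2 * x ^ n)) sums ellK k"
    unfolding ellK_def by simp
  from sums_mult[OF this, of "2/pi"] show ?thesis unfolding x_def by simp
qed

lemma E_sums:
  assumes k: "\<bar>k\<bar> < 1"
  shows "(\<lambda>n. ee n * cc n * (k^2) ^ n) sums (2 / pi * ellE k)"
proof -
  define x where "x = k^2"
  have x: "0 \<le> x" "x < 1" unfolding x_def using k
    by (auto simp: abs_square_less_1)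
  have F: "(\<lambda>n. ee n * (x * sin t ^ 2)^n) sums (sqrt (1 - k^2 * sin t ^ 2))" for t
  proof -
    have s: "0 \<le> x * sin t ^ 2" "x * sin t ^ 2 < 1"
    proof -
      show "0 \<le> x * sin t ^ 2" using x by simp
      have "x * sin t ^ 2 \<le> x * 1" using x by (intro mult_left_mono) (auto simp: abs_square_le_1)
      then show "x * sin t ^ 2 < 1" using x by simp
    qed
    have "\<bar>- (x * sin t ^ 2)\<bar> < 1" using s by simp
    from gen_binomial_real[OF this, of "1/2"]
    have "(\<lambda>n. ee n * (x * sin t ^ 2)^n) sums ((1 + - (x * sin t ^ 2)) powr (1/2))"
      by (simp only: gchoose_ee)
    also have "(1 + - (x * sin t ^ 2)) powr (1/2) = sqrt (1 - k^2 * sin t ^ 2)"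
      using s by (subst powr_half_sqrt) (auto simp: x_def)
    finally show ?thesis .
  qed
  have "(\<lambda>n. ee n * x^n * W n) sums integral {0..pi/2} (\<lambda>t. sqrt (1 - k^2 * sin t ^ 2))"
    by (rule integral_series[OF abs_ee_le1 x F])
  moreover have "ee n * x^n * W n = pi / 2 * (ee n * cc n * x ^ n)" for n
    unfolding W_eq by (simp only: ac_simps)
  ultimately have "(\<lambda>n. pi / 2 * (ee n * cc n * x ^ n)) sums ellE k"
    unfolding ellE_def by simp
  from sums_mult[OF this, of "2/pi"] show ?thesis unfolding x_def by (simp add: mult.assoc)
qed



lemma cc2_le1: "cc n ^ 2 \<le> 1"
  using cc_pos[of n] cc_le1[of n] by (simp add: power_le_one)

lemma AA_summable: "0 \<le> x \<Longrightarrow> x < 1 \<Longrightarrow> summable (\<lambda>n. cc n ^ 2 * x ^ n)"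
  by (rule summable_comparison_test[where g="\<lambda>n. x^n"])
     (auto intro!: exI[of _ 0] summable_geometric simp: abs_mult intro: mult_left_le_one_le cc2_le1)

lemma AA_sums: "0 \<le> x \<Longrightarrow> x < 1 \<Longrightarrow> (\<lambda>n. cc n ^ 2 * x ^ n) sums AA x"
  unfolding AA_def by (rule summable_sums[OF AA_summable])

lemma AA_ge1: assumes "0 \<le> x" "x < 1" shows "1 \<le> AA x"
proof -
  have "(\<Sum>n\<in>{0}. cc n ^ 2 * x ^ n) \<le> AA x"
    unfolding AA_def using assms by (intro sum_le_suminf AA_summable) (auto intro!: mult_nonneg_nonneg)
  then show ?thesis by simp
qed

lemma AA_strict_mono: assumes "0 \<le> x" "x < y" "y < 1" shows "AA x < AA y"
proof -
  have "0 < suminf (\<lambda>n. cc n ^ 2 * y ^ n - cc n ^ 2 * x ^ n)"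
  proof (subst suminf_pos_iff)
    show "summable (\<lambda>n. cc n ^ 2 * y ^ n - cc n ^ 2 * x ^ n)"
      using assms by (intro summable_diff AA_summable) auto
    show "0 \<le> cc n ^ 2 * y ^ n - cc n ^ 2 * x ^ n" for n
      using assms by (auto intro!: mult_left_mono power_mono)
    show "\<exists>i. 0 < cc i ^ 2 * y ^ i - cc i ^ 2 * x ^ i"
      using assms cc_pos[of 1] by (intro exI[of _ 1]) auto
  qed
  also have "\<dots> = AA y - AA x" unfolding AA_def using assms
    by (subst suminf_diff) (auto intro!: AA_summable)
  finally show ?thesis by simp
qed

lemma AA_cont: assumes "\<rho> < 1" shows "continuous_on {0..\<rho>} AA"
proof (cases "0 \<le> \<rho>")
  case True
  have u: "uniform_limit {0..\<rho>} (\<lambda>n x. \<Sum>i<n. cc i ^ 2 * x ^ i) (\<lambda>x. suminf (\<lambda>i. cc i ^ 2 * x ^ i)) sequentially"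
  proof (rule Weierstrass_m_test[where M="\<lambda>n. \<rho>^n"])
    show "summable (\<lambda>n. \<rho>^n)" using True assms by (intro summable_geometric) auto
    fix n x assume x: "x \<in> {0..\<rho>}"
    have "norm (cc n ^ 2 * x ^ n) = cc n ^ 2 * x ^ n" using x by simp
    also have "\<dots> \<le> 1 * \<rho> ^ n" using x cc2_le1[of n] by (intro mult_mono power_mono) auto
    finally show "norm (cc n ^ 2 * x ^ n) \<le> \<rho> ^ n" by simp
  qed
  show ?thesis
    by (rule uniform_limit_theorem[OF _ u[folded AA_def]]) (auto intro!: eventuallyI continuous_intros)
qed simp

lemma div4sq: "(b::real) \<noteq> 0 \<Longrightarrow> X / (4*b^2) * (4*b) = X / b"
  by (simp add: power2_eq_square field_simps)
lemma cc_sq_helper: "(M::real) \<ge> 0 \<Longrightarrow> ((C::real) * (2*M+1) / (2*M+2))^2 * (4 * (M+1)) = C^2 * ((2*M+1)^2 / (M+1))"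
proof -
  assume M: "M \<ge> 0"
  have "(C * (2*M+1) / (2*M+2))^2 = C^2*(2*M+1)^2 / (4*(M+1)^2)"
    by (simp add: power_divide power_mult_distrib power2_eq_square algebra_simps)
  moreover have "C^2*(2*M+1)^2 / (4*(M+1)^2) * (4 * (M+1)) = C^2*(2*M+1)^2 / (M+1)"
    using M by (intro div4sq) simp
  ultimately show ?thesis by simp
qed

lemma harm_helper: "(M::real) > 0 \<Longrightarrow> 1 \<le> 1 / (4 * M) * ((2*M+1)^2 / (M + 1))"
proof -
  assume M: "M > 0"
  have "1 / (4 * M) * ((2*M+1)^2 / (M + 1)) = (4 * M * (M + 1) + 1) / (4 * M * (M + 1))"
    using M by (simp add: field_simps power2_eq_square)
  also have "\<dots> \<ge> 1" using M by (subst le_divide_eq_1_pos) auto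
  finally show ?thesis .
qed

lemma cc2_lower: "n \<ge> 1 \<Longrightarrow> 1 \<le> cc n ^ 2 * (4 * real n)"
proof (induction n rule: dec_induct)
  case base
  have h: "cc (Suc 0) = 1/2" using cc_Suc[of 0] by simp
  show ?case by (simp add: h power2_eq_square)
next
  case (step m)
  have p1: "2 * real m + 2 > 0" "real m + 1 > 0" "real m > 0" using step by auto
  have e: "cc (Suc m)^2 * (4 * real (Suc m)) = cc m^2 * ((2*real m+1)^2 / (real m + 1))"
    unfolding cc_Suc using cc_sq_helper[of "real m" "cc m"] by (simp add: add.commute)
  have l: "cc m^2 \<ge> 1 / (4 * real m)" using step p1 by (simp add: field_simps)
  have "1 / (4 * real m) * ((2*real m+1)^2 / (real m + 1)) \<ge> 1" using p1 by (intro harm_helper) auto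

  also have "1 / (4 * real m) * ((2*real m+1)^2 / (real m + 1)) \<le> cc m^2 * ((2*real m+1)^2 / (real m + 1))"
    using l p1 by (intro mult_right_mono) auto
  finally show ?case using e by simp
qed

lemma cc2_not_summable: "\<not> summable (\<lambda>n. cc n ^ 2)"
proof
  assume "summable (\<lambda>n. cc n ^ 2)"
  then have "summable (\<lambda>n. 4 * cc n ^ 2)" by (rule summable_mult)
  then have "summable (\<lambda>n. inverse (real n))"
  proof (rule summable_comparison_test[rotated])
    show "\<exists>N. \<forall>n\<ge>N. norm (inverse (real n)) \<le> 4 * cc n ^ 2"
    proof (intro exI[of _ 1] allI impI)
      fix n :: nat assume n: "n \<ge> 1"
      have "inverse (real n) \<le> 4 * cc n ^ 2"
        using cc2_lower[OF n] n by (simp add: field_simps)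
      then show "norm (inverse (real n)) \<le> 4 * cc n ^ 2" by simp
    qed
  qed
  then show False using not_summable_harmonic[where 'a=real] by simp
qed

lemma AA_unbounded: "\<exists>x. 0 \<le> x \<and> x < 1 \<and> M < AA x"
proof -
  have "\<exists>N. M + 1 < (\<Sum>n<N. cc n ^ 2)"
  proof (rule ccontr)
    assume "\<not> ?thesis"
    then have "\<And>N. (\<Sum>n<N. cc n ^ 2) \<le> M + 1" by (simp add: not_less)
    then have "summable (\<lambda>n. cc n ^ 2)" by (intro summableI_nonneg_bounded) auto
    then show False using cc2_not_summable by simp
  qed
  then obtain N where N: "M + 1 < (\<Sum>n<N. cc n ^ 2)" by blast
  define p where "p x = (\<Sum>n<N. cc n ^ 2 * x ^ n)" for x :: real
  have "(p \<longlongrightarrow> p 1) (at_left 1)" unfolding p_def by (intro tendsto_intros)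
  moreover have "p 1 > M" using N by (simp add: p_def)
  ultimately have "eventually (\<lambda>x. p x > M) (at_left 1)" by (rule order_tendstoD)
  moreover have "eventually (\<lambda>x. x \<in> {0<..<1}) (at_left (1::real))" by (rule eventually_at_left_real) simp
  ultimately have "eventually (\<lambda>x. p x > M \<and> x \<in> {0<..<1}) (at_left (1::real))" by (rule eventually_conj)
  then have "at_left (1::real) = bot \<or> (\<exists>x. p x > M \<and> x \<in> {0<..<1})" by (rule eventually_happens)
  then obtain x where x: "p x > M" "0 < x" "x < 1"
    using trivial_limit_at_left_real by auto
  have "p x \<le> AA x" unfolding p_def AA_def using x
    by (intro sum_le_suminf AA_summable) auto
  then show ?thesis using x by (intro exI[of _ x]) auto
qed



lemma ellK_AA: assumes "\<bar>k\<bar> < 1" shows "ellK k = pi / 2 * AA (k^2)"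
proof -
  have x: "0 \<le> k^2" "k^2 < 1" using assms by (auto simp: abs_square_less_1)
  have "2 / pi * ellK k = AA (k^2)"
    using sums_unique2[OF K_sums[OF assms] AA_sums[OF x]] .
  then show ?thesis by (simp add: field_simps)
qed

lemma ellE_DD: assumes "\<bar>k\<bar> < 1" shows "ellE k = pi / 2 * DD (k^2)"
proof -
  have "2 / pi * ellE k = DD (k^2)"
    unfolding DD_def using E_sums[OF assms] by (simp add: sums_iff)
  then show ?thesis by (simp add: field_simps)
qed

lemma AA_mono: "0 \<le> x \<Longrightarrow> x \<le> y \<Longrightarrow> y < 1 \<Longrightarrow> AA x \<le> AA y"
  using AA_strict_mono[of x y] by (cases "x = y") auto

definition G :: "real \<Rightarrow> real" where "G w = AA (1 - w^2) / AA (w^2)"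

lemma G_eq: assumes "0 < w" "w < 1" shows "ellK (sqrt (1 - w^2)) / ellK w = G w"
proof -
  have w2: "0 < w^2" "w^2 < 1" using assms by (auto simp: power_less_one_iff)
  have "sqrt (1 - w^2) < sqrt 1" using w2 by (intro real_sqrt_less_mono) simp
  then have s: "\<bar>sqrt (1 - w^2)\<bar> < 1" using w2 by simp
  have s2: "(sqrt (1 - w^2))^2 = 1 - w^2" using w2 by simp
  have "\<bar>w\<bar> < 1" using assms by simp
  then have e2: "ellK w = pi / 2 * AA (w^2)" by (rule ellK_AA)
  have e1: "ellK (sqrt (1 - w^2)) = pi / 2 * AA (1 - w^2)" using ellK_AA[OF s] s2 by simp
  show ?thesis unfolding G_def e1 e2 by simp
qed

lemma G_strict_anti: assumes "0 < w" "w < v" "v < 1" shows "G v < G w"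
proof -
  have ww: "0 < w^2" "w^2 < v^2" "v^2 < 1" using assms by (auto intro: power_strict_mono simp: power_less_one_iff)
  have a1: "AA (1 - v^2) < AA (1 - w^2)" using ww by (intro AA_strict_mono) auto
  have a2: "AA (w^2) < AA (v^2)" using ww by (intro AA_strict_mono) auto
  have p: "1 \<le> AA (1 - v^2)" "1 \<le> AA (w^2)" using ww by (auto intro!: AA_ge1)
  have "AA (1 - v^2) / AA (v^2) < AA (1 - w^2) / AA (v^2)" using a1 a2 p by (intro divide_strict_right_mono) auto
  also have "\<dots> \<le> AA (1 - w^2) / AA (w^2)" using a1 a2 p by (intro divide_left_mono) auto
  finally show ?thesis unfolding G_def .
qed

lemma G_exists: assumes "s > 0" shows "\<exists>w. 0 < w \<and> w < 1 \<and> G w = s"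
proof -
  define m where "m = AA (1/2)"
  have m1: "1 \<le> m" unfolding m_def by (rule AA_ge1) auto
  obtain x1 where x1: "0 \<le> x1" "x1 < 1" "max (m / s) m < AA x1" using AA_unbounded by blast
  obtain x0 where x0: "0 \<le> x0" "x0 < 1" "max (s * m) m < AA x0" using AA_unbounded by blast
  have x1h: "1/2 < x1"
  proof (rule ccontr)
    assume "\<not> 1/2 < x1" then have "AA x1 \<le> m" unfolding m_def using x1 by (intro AA_mono) auto
    then show False using x1 by simp
  qed
  have x0h: "1/2 < x0"
  proof (rule ccontr)
    assume "\<not> 1/2 < x0" then have "AA x0 \<le> m" unfolding m_def using x0 by (intro AA_mono) auto
    then show False using x0 by simp
  qed
  define w1 where "w1 = sqrt x1"
  define w0 where "w0 = sqrt (1 - x0)"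
  have w1sq: "w1^2 = x1" unfolding w1_def using x1 by simp
  have w0sq: "w0^2 = 1 - x0" unfolding w0_def using x0 by simp
  have w01: "0 < w0" "w0 < w1" "w1 < 1"
    unfolding w0_def w1_def using x0 x1 x0h x1h by (auto simp: real_sqrt_less_iff[of _ 1, simplified])
  have Gw1: "G w1 \<le> s"
  proof -
    have "AA (1 - x1) \<le> m" unfolding m_def using x1 x1h by (intro AA_mono) auto
    moreover have "m / s < AA x1" using x1 by simp
    then have "m < s * AA x1" using assms by (simp add: field_simps)
    moreover have "AA x1 > 0" using AA_ge1[of x1] x1 by simp
    ultimately show ?thesis unfolding G_def w1sq by (simp add: divide_le_eq)
  qed
  have Gw0: "s \<le> G w0"
  proof -
    have e: "1 - w0^2 = x0" using w0sq by simp
    have "AA (1 - x0) \<le> m" unfolding m_def using x0 x0h by (intro AA_mono) auto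
    moreover have "s * m < AA x0" using x0 by simp
    moreover have "AA (1 - x0) > 0" using AA_ge1[of "1 - x0"] x0 x0h by simp
    ultimately have "s * AA (1 - x0) \<le> AA x0" using assms
      by (smt (verit) mult_left_mono)
    then show ?thesis unfolding G_def e w0sq using \<open>AA (1 - x0) > 0\<close> by (simp add: le_divide_eq)
  qed
  define \<rho> where "\<rho> = max x0 x1"
  have \<rho>: "\<rho> < 1" unfolding \<rho>_def using x0 x1 by simp
  have cont: "continuous_on {w0..w1} G"
  proof -
    have r1: "(\<lambda>w. w^2) ` {w0..w1} \<subseteq> {0..\<rho>}"
    proof
      fix y assume "y \<in> (\<lambda>w. w^2) ` {w0..w1}"
      then obtain w where w: "w \<in> {w0..w1}" "y = w^2" by auto
      have "w^2 \<le> w1^2" using w w01 by (intro power_mono) auto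
      then show "y \<in> {0..\<rho>}" using w w1sq unfolding \<rho>_def by auto
    qed
    have r2: "(\<lambda>w. 1 - w^2) ` {w0..w1} \<subseteq> {0..\<rho>}"
    proof
      fix y assume "y \<in> (\<lambda>w. 1 - w^2) ` {w0..w1}"
      then obtain w where w: "w \<in> {w0..w1}" "y = 1 - w^2" by auto
      have "w^2 \<le> w1^2" using w w01 by (intro power_mono) auto
      moreover have "w0^2 \<le> w^2" using w w01 by (intro power_mono) auto
      ultimately have "0 \<le> y" "y \<le> x0" using w(2) w1sq w0sq x1 by linarith+
      then show "y \<in> {0..\<rho>}" unfolding \<rho>_def by auto
    qed
    have c1: "continuous_on {w0..w1} (\<lambda>w. AA (w^2))"
      by (rule continuous_on_compose2[OF AA_cont[OF \<rho>] _ r1]) (intro continuous_intros)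
    have c2: "continuous_on {w0..w1} (\<lambda>w. AA (1 - w^2))"
      by (rule continuous_on_compose2[OF AA_cont[OF \<rho>] _ r2]) (intro continuous_intros)
    have nz: "AA (w^2) \<noteq> 0" if "w \<in> {w0..w1}" for w
    proof -
      have "w^2 \<in> {0..\<rho>}" using r1 that by blast
      then have "1 \<le> AA (w^2)" using \<rho> by (intro AA_ge1) auto
      then show ?thesis by simp
    qed
    show ?thesis unfolding G_def by (intro continuous_on_divide c1 c2) (use nz in auto)
  qed
  obtain w where w: "w0 \<le> w" "w \<le> w1" "G w = s"
    using IVT2'[of G w1 s w0, OF Gw1 Gw0 _ cont] w01 by auto
  then show ?thesis using w01 by (intro exI[of _ w]) auto
qed

lemma singular_modulus_bounds: assumes "r > 0" shows "0 < singular_modulus r \<and> singular_modulus r < 1"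
proof -
  define P where "P w = (0 < w \<and> w < 1 \<and> ellK (sqrt (1 - w^2)) / ellK w = sqrt r)" for w
  have "\<exists>!w. P w"
  proof -
    obtain w where w: "0 < w" "w < 1" "G w = sqrt r" using G_exists[of "sqrt r"] assms by auto
    show ?thesis
    proof (rule ex1I[of _ w])
      show "P w" unfolding P_def using w G_eq[of w] by simp
      fix v assume "P v"
      then have v: "0 < v" "v < 1" "G v = sqrt r" unfolding P_def using G_eq[of v] by auto
      show "v = w"
      proof (rule ccontr)
        assume "v \<noteq> w"
        then consider "v < w" | "w < v" by linarith
        then show False
        proof cases
          case 1 then show False using G_strict_anti[of v w] v w by simp
        next
          case 2 then show False using G_strict_anti[of w v] v w by simp
        qed
      qed
    qed
  qed
  then have "P (THE w. P w)" by (rule theI')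
  moreover have "singular_modulus r = (THE w. P w)" unfolding singular_modulus_def P_def ..
  ultimately show ?thesis unfolding P_def by simp
qed



lemma B2_eq: "B2 n / (fact n)^2 = (\<Sum>i\<le>n. cc i ^ 2 * cc (n - i) ^ 2)"
proof -
  have "B2 n / (fact n)^2 = (\<Sum>j\<in>{0..n}. (real (n choose j) * pochhammer (1/2) j * pochhammer (1/2) (n - j))^2 / (fact n)^2)"
    unfolding B2_def by (rule sum_divide_distrib)
  also have "\<dots> = (\<Sum>i\<le>n. cc i ^ 2 * cc (n - i) ^ 2)"
    unfolding atLeast0AtMost
  proof (rule sum.cong[OF refl])
    fix j assume "j \<in> {..n}"
    then have j: "j \<le> n" by simp
    have "real (n choose j) * pochhammer (1/2) j * pochhammer (1/2) (n - j) / fact n = cc j * cc (n - j)"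
      unfolding binomial_fact[OF j] cc_def by (simp add: field_simps)
    then have "(real (n choose j) * pochhammer (1/2) j * pochhammer (1/2) (n - j))^2 / (fact n)^2 = (cc j * cc (n - j))^2"
      by (metis power_divide)
    then show "(real (n choose j) * pochhammer (1/2) j * pochhammer (1/2) (n - j))^2 / (fact n)^2 = cc j ^ 2 * cc (n - j) ^ 2"
      by (simp add: power_mult_distrib)
  qed
  finally show ?thesis .
qed

lemma summable_n_pow: "0 \<le> (x::real) \<Longrightarrow> x < 1 \<Longrightarrow> summable (\<lambda>n. real n * x ^ n)"
proof -
  assume x: "0 \<le> x" "x < 1"
  have "summable (\<lambda>n. diffs (\<lambda>n. 1::real) n * x ^ n)"
    by (rule termdiff_converges[of x 1]) (use x in \<open>auto intro: summable_geometric\<close>)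
  then have "summable (\<lambda>n. real (Suc n) * x ^ n)" by (simp add: diffs_def)
  then show ?thesis
    by (rule summable_comparison_test[rotated]) (use x in \<open>auto intro!: exI[of _ 0] mult_right_mono\<close>)
qed

theorem theorem2p2:
  fixes r :: real
  assumes "r > 0"
  shows "(\<lambda>n. B2 n / (fact n)^2 * (singular_modulus r)^(2*n) *
            (sqrt r * (1 - (singular_modulus r)^2) * real n + elliptic_alpha r
             - sqrt r * (singular_modulus r)^2))
         sums (1 / pi)"
proof -
  define k where "k = singular_modulus r"
  have k: "0 < k" "k < 1" using singular_modulus_bounds[OF assms] unfolding k_def by auto
  have kabs: "\<bar>k\<bar> < 1" using k by simp
  define x where "x = k^2"
  have x: "0 \<le> x" "x < 1" unfolding x_def using k by (auto simp: power_less_one_iff)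
  define s where "s = sqrt r"
  define \<alpha> where "\<alpha> = elliptic_alpha r"
  define u where "u i = cc i ^ 2 * x ^ i" for i
  define p where "p i = real i * cc i ^ 2 * x ^ i" for i
  define A where "A = AA x"
  define D where "D = DD x"
  have uA: "u sums A" unfolding u_def A_def by (rule AA_sums[OF x])
  have A1: "1 \<le> A" unfolding A_def by (rule AA_ge1[OF x])
  have psum: "summable p"
  proof (rule summable_comparison_test[rotated])
    show "summable (\<lambda>n. real n * x ^ n)" by (rule summable_n_pow[OF x])
    show "\<exists>N. \<forall>n\<ge>N. norm (p n) \<le> real n * x ^ n"
    proof (intro exI[of _ 0] allI impI)
      fix n :: nat
      have "norm (p n) = real n * x^n * cc n ^ 2" unfolding p_def using x by (simp add: mult_ac)
      also have "\<dots> \<le> real n * x^n * 1" using x cc2_le1[of n] by (intro mult_left_mono) auto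
      finally show "norm (p n) \<le> real n * x ^ n" by simp
    qed
  qed
  define P where "P = suminf p"
  have pP: "p sums P" unfolding P_def using psum by (rule summable_sums)
  have dD: "(\<lambda>n. ee n * cc n * x ^ n) sums D"
  proof -
    have "summable (\<lambda>n. ee n * cc n * x ^ n)" using E_sums[OF kabs] unfolding x_def by (simp add: sums_iff)
    then show ?thesis unfolding D_def DD_def by (rule summable_sums)
  qed
  define q where "q n = (2 * real n + 1) * cc n ^ 2 * x ^ n" for n
  have qQ: "q sums (2 * P + A)"
  proof -
    have "(\<lambda>n. 2 * p n + u n) sums (2 * P + A)" by (intro sums_add sums_mult pP uA)
    moreover have "(\<lambda>n. 2 * p n + u n) = q" unfolding p_def u_def q_def by (rule ext) (simp add: algebra_simps)
    ultimately show ?thesis by simp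
  qed
  define f where "f n = (if n = 0 then 0 else (2 * real (n - 1) + 1) * cc (n - 1) ^ 2 * x ^ n)" for n
  have fsum: "f sums (x * (2 * P + A))"
  proof -
    have "(\<lambda>n. x * q n) sums (x * (2 * P + A))" by (rule sums_mult[OF qQ])
    moreover have "(\<lambda>n. x * q n) = (\<lambda>n. f (Suc n))" unfolding f_def q_def by (rule ext) (simp add: algebra_simps)
    ultimately have "(\<lambda>n. f (Suc n)) sums (x * (2 * P + A))" by simp
    then show ?thesis unfolding sums_Suc_iff by (simp add: f_def)
  qed
  have "(\<lambda>n. q n - f n) sums (2 * P + A - x * (2 * P + A))" by (rule sums_diff[OF qQ fsum])
  moreover have "(\<lambda>n. q n - f n) = (\<lambda>n. ee n * cc n * x ^ n)"
  proof (rule ext)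
    fix n
    show "q n - f n = ee n * cc n * x ^ n"
    proof (cases n)
      case 0 then show ?thesis unfolding q_def f_def by (simp add: ee_def)
    next
      case (Suc m)
      have "ee n * cc n = (2 * real n + 1) * cc n ^ 2 - (2 * real n - 1) * cc m ^ 2"
        using coeff_identity[of n] Suc by simp
      moreover have "2 * real (n - 1) + 1 = 2 * real n - 1" using Suc by simp
      moreover have "q n - f n = ((2 * real n + 1) * cc n ^ 2 - (2 * real n - 1) * cc m ^ 2) * x ^ n"
        unfolding q_def f_def using Suc \<open>2 * real (n - 1) + 1 = 2 * real n - 1\<close> by (simp add: algebra_simps)
      ultimately show ?thesis by simp
    qed
  qed
  ultimately have DPA: "D = (1 - x) * (2 * P + A)" using dD sums_unique2 by (fastforce simp: algebra_simps)
  have nu: "summable (\<lambda>i. norm (u i))" using uA x unfolding u_def by (simp add: sums_iff)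
  have np: "summable (\<lambda>i. norm (p i))" using psum x unfolding p_def by simp
  have C0: "(\<lambda>n. \<Sum>i\<le>n. u i * u (n - i)) sums (A * A)"
    using Cauchy_product_sums[OF nu nu] uA by (simp add: sums_iff)
  have C1: "(\<lambda>n. \<Sum>i\<le>n. p i * u (n - i)) sums (P * A)"
    using Cauchy_product_sums[OF np nu] uA pP by (simp add: sums_iff)
  have C2: "(\<lambda>n. \<Sum>i\<le>n. u i * p (n - i)) sums (A * P)"
    using Cauchy_product_sums[OF nu np] uA pP by (simp add: sums_iff)
  have total: "(\<lambda>n. s * (1 - x) * ((\<Sum>i\<le>n. p i * u (n - i)) + (\<Sum>i\<le>n. u i * p (n - i)))
        + (\<alpha> - s * x) * (\<Sum>i\<le>n. u i * u (n - i))) sums (s * (1 - x) * (P * A + A * P) + (\<alpha> - s * x) * (A * A))"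
    by (intro sums_add sums_mult C0 C1 C2)
  have trm: "B2 n / (fact n)^2 * k^(2*n) * (s * (1 - k^2) * real n + \<alpha> - s * k^2)
     = s * (1 - x) * ((\<Sum>i\<le>n. p i * u (n - i)) + (\<Sum>i\<le>n. u i * p (n - i)))
        + (\<alpha> - s * x) * (\<Sum>i\<le>n. u i * u (n - i))" for n
  proof -
    define b where "b = (\<Sum>i\<le>n. cc i ^ 2 * cc (n - i) ^ 2)"
    have xi: "x ^ i * x ^ (n - i) = x ^ n" if "i \<le> n" for i
      using that by (simp flip: power_add)
    have e0: "(\<Sum>i\<le>n. u i * u (n - i)) = b * x^n"
      unfolding b_def sum_distrib_right u_def
      by (intro sum.cong refl) (simp add: xi[symmetric] mult_ac)
    have "(\<Sum>i\<le>n. p i * u (n - i)) + (\<Sum>i\<le>n. u i * p (n - i))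
        = (\<Sum>i\<le>n. p i * u (n - i) + u i * p (n - i))" by (simp add: sum.distrib)
    also have "\<dots> = (\<Sum>i\<le>n. real n * (cc i ^ 2 * cc (n - i) ^ 2) * x^n)"
    proof (intro sum.cong refl)
      fix i assume "i \<in> {..n}"
      then have i: "i \<le> n" by simp
      have "p i * u (n - i) + u i * p (n - i) = (real i + real (n - i)) * (cc i ^ 2 * cc (n - i) ^ 2) * (x ^ i * x ^ (n - i))"
        unfolding p_def u_def by (simp add: algebra_simps)
      also have "real i + real (n - i) = real n" using i by simp
      finally show "p i * u (n - i) + u i * p (n - i) = real n * (cc i ^ 2 * cc (n - i) ^ 2) * x^n"
        using xi[OF i] by simp
    qed
    also have "\<dots> = real n * b * x^n" unfolding b_def by (simp add: sum_distrib_left sum_distrib_right mult_ac)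
    finally have e1: "(\<Sum>i\<le>n. p i * u (n - i)) + (\<Sum>i\<le>n. u i * p (n - i)) = real n * b * x^n" .
    have "k^(2*n) = x^n" unfolding x_def by (simp add: power_mult)
    then show ?thesis unfolding e0 e1 B2_eq b_def[symmetric] x_def[symmetric]
      by (simp add: algebra_simps)
  qed
  have KA: "ellK k = pi / 2 * A" unfolding A_def x_def by (rule ellK_AA[OF kabs])
  have ED: "ellE k = pi / 2 * D" unfolding D_def x_def by (rule ellE_DD[OF kabs])
  have alpha: "\<alpha> = 1 / (pi * A^2) - s * (D / A - 1)"
    unfolding \<alpha>_def elliptic_alpha_def Let_def k_def[symmetric] KA ED s_def
    using A1 by (simp add: field_simps power2_eq_square)
  have final: "s * (1 - x) * (P * A + A * P) + (\<alpha> - s * x) * (A * A) = 1 / pi"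
    unfolding alpha DPA using A1 by (simp add: field_simps power2_eq_square)
  show ?thesis
    unfolding k_def[symmetric] s_def[symmetric] \<alpha>_def[symmetric] trm final[symmetric]
    by (rule total)
qed


end
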